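(* Let $n$ be a positive even integer and let $\pi$ be chosen uniformly at random from the permutations of $[n]$ all of whose cycle lengths are even. For a positive integer $k\le n$, let $Y_k$ be the number of elements of $[n]$ lying in $k$-cycles of $\pi$. Then \[ \mathbb{E}_e^{(n)}Y_k=\frac{n(n-2)\cdots(n-k+2)}{(n-1)(n-3)\cdots(n-k+1)} \] if $k$ is even, and $\mathbb{E}_e^{(n)}Y_k=0$ if $k$ is odd.
   Context: $\mathbb{E}_e^{(n)}$ denotes expectation under the uniform measure on permutations of $[n]$ with all cycle lengths even. $Y_k=kX_k$, where $X_k$ is the number of $k$-cycles. *)

theory Defs
  imports "HOL-Combinatorics.Combinatorics" Complex_Main
begin

definition cycle_len :: "(nat \<Rightarrow> nat) \<Rightarrow> nat \<Rightarrow> nat" where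
  "cycle_len p x = card (orbit p x)"

definition even_cycle_perms :: "nat \<Rightarrow> (nat \<Rightarrow> nat) set" where
  "even_cycle_perms n = {p. p permutes {1..n} \<and> (\<forall>x\<in>{1..n}. even (cycle_len p x))}"

definition Y :: "nat \<Rightarrow> nat \<Rightarrow> (nat \<Rightarrow> nat) \<Rightarrow> nat" where
  "Y n k p = card {x\<in>{1..n}. cycle_len p x = k}"

definition EY_even :: "nat \<Rightarrow> nat \<Rightarrow> real" where
  "EY_even n k = (\<Sum>p\<in>even_cycle_perms n. real (Y n k p)) / real (card (even_cycle_perms n))"

end

theory Submission imports Defs begin

lemma supp_facts:
  assumes "p permutes S" "finite S"
  shows "orbit p x = set (support p x)" "distinct (support p x)"
    "card (orbit p x) = length (support p x)" "support p x = x # tl (support p x)"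
proof -
  have pp: "permutation p" using assms permutation_permutes by blast
  show 1: "orbit p x = set (support p x)"
    using orbit_altdef_permutation[OF pp] support_set[OF pp] by auto
  show 2: "distinct (support p x)" using cycle_of_permutation[OF pp] .
  show "card (orbit p x) = length (support p x)" using 1 2 distinct_card by metis
  have "least_power p x > 0" using least_power_of_permutation(2)[OF pp] .
  then have "[0..<least_power p x] = 0 # [1..<least_power p x]" by (simp add: upt_rec)
  then show "support p x = x # tl (support p x)" by simp
qed

lemma funpow_cycle_nth:
  assumes "distinct cs" "cs \<noteq> []"
  shows "(cycle_of_list cs ^^ i) (cs ! 0) = cs ! (i mod length cs)"
proof -
  have "map (cycle_of_list cs ^^ i) cs = rotate i cs" using cyclic_rotation[OF assms(1)] .
  then have "map (cycle_of_list cs ^^ i) cs ! 0 = rotate i cs ! 0" by simp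
  then show ?thesis using assms(2) by (simp add: nth_rotate)
qed

lemma support_comp:
  assumes "distinct cs" "cs \<noteq> []" "q permutes T" "set cs \<inter> T = {}"
  shows "support (cycle_of_list cs \<circ> q) (cs ! 0) = cs"
proof -
  let ?c = "cycle_of_list cs" let ?p = "?c \<circ> q" let ?x = "cs ! 0" let ?L = "length cs"
  have cp: "?c permutes set cs" by (rule cycle_permutes)
  have eq: "?p z = ?c z" if "z \<in> set cs" for z
  proof -
    have "z \<notin> T" using that assms(4) by blast
    then show ?thesis using permutes_not_in[OF assms(3)] by simp
  qed
  have pw: "(?p ^^ i) ?x = (?c ^^ i) ?x" for i
  proof (induction i)
    case (Suc i)
    have "(?c ^^ i) ?x \<in> set cs"
      using permutes_in_image[OF permutes_funpow[OF cp, of i]] assms(2) by (simp add: nth_mem)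
    then show ?case using Suc eq by simp
  qed simp
  have pw2: "(?p ^^ i) ?x = cs ! (i mod ?L)" for i
    using pw funpow_cycle_nth[OF assms(1,2)] by simp
  have iff: "cs ! (i mod ?L) = ?x \<longleftrightarrow> i mod ?L = 0" for i
    using assms(1,2) nth_eq_iff_index_eq[OF assms(1)] by (metis length_greater_0_conv mod_less_divisor)
  have lp: "least_power ?p ?x = ?L"
    unfolding least_power_def
  proof (rule Least_equality)
    show "(?p ^^ ?L) ?x = ?x \<and> 0 < ?L" using pw2 assms(2) by simp
    fix y assume "(?p ^^ y) ?x = ?x \<and> 0 < y"
    then have "y mod ?L = 0" "y > 0" using pw2 iff by auto
    then show "?L \<le> y" by (metis mod_less not_less not_gr0)
  qed
  have "map (\<lambda>i. cs ! (i mod ?L)) [0..<?L] = map (\<lambda>i. cs ! i) [0..<?L]"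
    by (rule map_cong) auto
  then show ?thesis unfolding lp using pw2 by (simp add: map_nth)
qed

definition Ev :: "'a set \<Rightarrow> ('a \<Rightarrow> 'a) set" where
  "Ev S = {p. p permutes S \<and> (\<forall>x\<in>S. even (card (orbit p x)))}"

lemma fiber_bij:
  assumes fin: "finite S" and dcs: "distinct cs" and ne: "cs \<noteq> []" and sub: "set cs \<subseteq> S"
    and ev: "even (length cs)"
  shows "card {p\<in>Ev S. support p (cs!0) = cs} = card (Ev (S - set cs))"
proof -
  define x where "x = cs ! 0"
  define c where "c = cycle_of_list cs"
  define T where "T = S - set cs"
  have finT: "finite T" using fin T_def by simp
  have cp: "c permutes set cs" unfolding c_def by (rule cycle_permutes)
  have cS: "c permutes S" using permutes_subset[OF cp sub] .
  let ?F = "{p\<in>Ev S. support p x = cs}"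
  let ?f = "\<lambda>p. perm_restrict p T"
  let ?g = "\<lambda>q. c \<circ> q"
  have Fprops: "p permutes S \<and> orbit p x = set cs \<and> cyclic_on p (set cs) \<and> (\<forall>z\<in>set cs. p z = c z)"
    if "p \<in> ?F" for p
  proof -
    have ps: "p permutes S" and spx: "support p x = cs" using that by (auto simp: Ev_def)
    have pp: "permutation p" using ps fin permutation_permutes by blast
    have o: "orbit p x = set cs" using supp_facts(1)[OF ps fin, of x] spx by simp
    have "cyclic_on p (orbit p x)" using cyclic_on_orbit[OF ps fin] .
    moreover have "\<forall>z\<in>set cs. p z = c z"
      using cycle_restrict[OF pp, of _ x] spx unfolding c_def by simp
    ultimately show ?thesis using ps o by simp
  qed
  have b: "bij_betw ?f ?F (Ev T)"
  proof (rule bij_betw_byWitness[where f'="?g"])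
    show "\<forall>p\<in>?F. ?g (?f p) = p"
    proof
      fix p assume pF: "p \<in> ?F"
      note P = Fprops[OF pF]
      show "?g (?f p) = p"
      proof
        fix z
        show "?g (?f p) z = p z"
        proof (cases "z \<in> set cs")
          case True then show ?thesis using P by (simp add: perm_restrict_def T_def)
        next
          case False
          show ?thesis
          proof (cases "z \<in> S")
            case True
            have "p z \<notin> set cs" using cyclic_on_f_in[of p S "set cs" z] P False by blast
            then show ?thesis using True False
              by (simp add: perm_restrict_def T_def c_def id_outside_supp)
          next
            case F2: False
            then have "p z = z" using P permutes_not_in by metis
            then show ?thesis using False F2
              by (simp add: perm_restrict_def T_def c_def id_outside_supp)
          qed
        qed
      qed
    qed
    show "\<forall>q\<in>Ev T. ?f (?g q) = q"
    proof
      fix q assume "q \<in> Ev T"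
      then have qT: "q permutes T" by (simp add: Ev_def)
      show "?f (?g q) = q"
      proof
        fix z show "?f (?g q) z = q z"
        proof (cases "z \<in> T")
          case True
          then have "q z \<in> T" using permutes_in_image[OF qT] by simp
          then have "q z \<notin> set cs" using T_def by simp
          then show ?thesis using True by (simp add: perm_restrict_def c_def id_outside_supp)
        next
          case False then show ?thesis using permutes_not_in[OF qT] by (simp add: perm_restrict_def)
        qed
      qed
    qed
    show "?f ` ?F \<subseteq> Ev T"
    proof
      fix r assume "r \<in> ?f ` ?F"
      then obtain p where pF: "p \<in> ?F" and r: "r = ?f p" by blast
      note P = Fprops[OF pF]
      have ps: "p permutes S" using P by simp
      have pp: "permutation p" using ps fin permutation_permutes by blast
      have rT: "r permutes T" unfolding r T_def using perm_restrict_diff_cyclic[of p S "set cs"] P by simp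
      have "even (card (orbit r z))" if zT: "z \<in> T" for z
      proof -
        have zS: "z \<in> S" and zc: "z \<notin> set cs" using zT T_def by auto
        have "s \<in> T" if sz: "s \<in> orbit p z" for s
        proof -
          have "s \<in> S" using permutes_orbit_subset[OF ps zS] sz by blast
          moreover have "s \<notin> set cs"
          proof
            assume sc: "s \<in> set cs"
            have "orbit p s = orbit p z"
              using orbit_cyclic_eq3[OF cyclic_on_orbit[OF ps fin, of z] sz] .
            moreover have "orbit p s = set cs" using orbit_cyclic_eq3[of p "set cs" s] P sc by simp
            ultimately show False using permutation_self_in_orbit[OF pp, of z] zc by simp
          qed
          ultimately show ?thesis using T_def by simp
        qed
        then have "orbit r z = orbit p z"
          using orbit_cong[of z p r] permutation_self_in_orbit[OF pp, of z]
          by (simp add: r perm_restrict_def)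
        then show ?thesis using pF zS by (simp add: Ev_def)
      qed
      then show "r \<in> Ev T" using rT by (simp add: Ev_def)
    qed
    show "?g ` Ev T \<subseteq> ?F"
    proof
      fix r assume "r \<in> ?g ` Ev T"
      then obtain q where qE: "q \<in> Ev T" and r: "r = ?g q" by blast
      have qT: "q permutes T" using qE by (simp add: Ev_def)
      have qq: "permutation q" using qT finT permutation_permutes by blast
      have qS: "q permutes S" using permutes_subset[OF qT] T_def by auto
      have rS: "r permutes S" unfolding r using permutes_compose[OF qS cS] .
      have sr: "support r x = cs" unfolding r x_def c_def
        using support_comp[OF dcs ne qT] T_def by auto
      have orx: "orbit r x = set cs" using supp_facts(1)[OF rS fin, of x] sr by simp
      have "even (card (orbit r z))" if zS: "z \<in> S" for z
      proof (cases "z \<in> set cs")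
        case True
        then have "orbit r z = set cs"
          using orbit_cyclic_eq3[OF cyclic_on_orbit[OF rS fin, of x]] orx by simp
        then show ?thesis using distinct_card[OF dcs] ev by simp
      next
        case False
        then have zT: "z \<in> T" using zS T_def by simp
        have "r s = q s" if sz: "s \<in> orbit q z" for s
        proof -
          have "s \<in> T" using permutes_orbit_subset[OF qT zT] sz by blast
          then have "q s \<in> T" using permutes_in_image[OF qT] by simp
          then have "q s \<notin> set cs" using T_def by simp
          then show ?thesis by (simp add: r c_def id_outside_supp)
        qed
        then have "orbit r z = orbit q z"
          using orbit_cong[of z q r] permutation_self_in_orbit[OF qq, of z] by simp
        then show ?thesis using qE zT by (simp add: Ev_def)
      qed
      then show "r \<in> ?F" using rS sr by (simp add: Ev_def)
    qed
  qed
  show ?thesis using bij_betw_same_card[OF b] x_def T_def by simp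
qed

lemma finite_Ev: "finite S \<Longrightarrow> finite (Ev S)"
  by (rule finite_subset[OF _ finite_permutations[of S]]) (auto simp: Ev_def)

lemma count_even:
  assumes fin: "finite S" and xS: "x \<in> S" and ev: "even k" and k1: "k \<ge> 1"
  shows "card {p\<in>Ev S. card (orbit p x) = k} =
    (\<Sum>ys\<in>{ys. length ys = k - 1 \<and> distinct ys \<and> set ys \<subseteq> S - {x}}. card (Ev (S - insert x (set ys))))"
proof -
  define L where "L = {ys. length ys = k - 1 \<and> distinct ys \<and> set ys \<subseteq> S - {x}}"
  have finL: "finite L" unfolding L_def
    by (rule finite_subset[OF _ finite_lists_length_eq[of "S - {x}" "k - 1"]]) (use fin in auto)
  have eq: "{p\<in>Ev S. card (orbit p x) = k} = (\<Union>ys\<in>L. {p\<in>Ev S. support p ((x#ys)!0) = x#ys})"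
  proof (intro set_eqI iffI)
    fix p assume "p \<in> {p\<in>Ev S. card (orbit p x) = k}"
    then have pE: "p \<in> Ev S" and ck: "card (orbit p x) = k" by auto
    have ps: "p permutes S" using pE by (simp add: Ev_def)
    note SF = supp_facts[OF ps fin, of x]
    define ys where "ys = tl (support p x)"
    have sp: "support p x = x # ys" using SF ys_def by simp
    have "length ys = k - 1" using SF(3) ck sp by simp
    moreover have "distinct ys" "x \<notin> set ys" using SF(2) sp by auto
    moreover have "set ys \<subseteq> S" using permutes_orbit_subset[OF ps xS] SF(1) sp by auto
    ultimately have "ys \<in> L" unfolding L_def by auto
    then show "p \<in> (\<Union>ys\<in>L. {p\<in>Ev S. support p ((x#ys)!0) = x#ys})" using pE sp by auto
  next
    fix p assume "p \<in> (\<Union>ys\<in>L. {p\<in>Ev S. support p ((x#ys)!0) = x#ys})"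
    then obtain ys where ys: "ys \<in> L" and pE: "p \<in> Ev S" and sp: "support p x = x # ys" by auto
    have ps: "p permutes S" using pE by (simp add: Ev_def)
    have "card (orbit p x) = k" using supp_facts(3)[OF ps fin, of x] sp ys k1 by (simp add: L_def)
    then show "p \<in> {p\<in>Ev S. card (orbit p x) = k}" using pE by simp
  qed
  have "card {p\<in>Ev S. card (orbit p x) = k} =
      (\<Sum>ys\<in>L. card {p\<in>Ev S. support p ((x#ys)!0) = x#ys})"
    unfolding eq
    by (rule card_UN_disjoint[OF finL]) (auto intro: finite_subset[OF _ finite_Ev[OF fin]])
  also have "\<dots> = (\<Sum>ys\<in>L. card (Ev (S - insert x (set ys))))"
  proof (rule sum.cong[OF refl])
    fix ys assume "ys \<in> L"
    then have "distinct (x#ys)" "set (x#ys) \<subseteq> S" "even (length (x#ys))"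
      using xS ev k1 by (auto simp: L_def)
    from fiber_bij[OF fin this(1) _ this(2,3)]
    show "card {p\<in>Ev S. support p ((x#ys)!0) = x#ys} = card (Ev (S - insert x (set ys)))" by simp
  qed
  finally show ?thesis unfolding L_def .
qed

fun fe :: "nat \<Rightarrow> nat" where
  "fe 0 = 1" | "fe (Suc 0) = 0" | "fe (Suc (Suc m)) = (Suc m)^2 * fe m"

definition gsum :: "nat \<Rightarrow> nat" where
  "gsum m = (\<Sum>k\<in>{1..m}. if even k then \<Prod>{m-k+1..m-1} * fe (m-k) else 0)"

lemma Ev_card_rec:
  fixes S :: "'a set"
  assumes fin: "finite S" and cS: "card S = m" and m: "m \<ge> 1"
    and IH: "\<And>T::'a set. finite T \<Longrightarrow> card T < m \<Longrightarrow> card (Ev T) = fe (card T)"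
  shows "card (Ev S) = gsum m"
proof -
  obtain x where xS: "x \<in> S" using m cS by fastforce
  have eq: "Ev S = (\<Union>k\<in>{1..m}. {p\<in>Ev S. card (orbit p x) = k})"
  proof (intro set_eqI iffI)
    fix p assume pE: "p \<in> Ev S"
    then have ps: "p permutes S" by (simp add: Ev_def)
    have "orbit p x \<subseteq> S" using permutes_orbit_subset[OF ps xS] .
    then have "card (orbit p x) \<le> m" using card_mono[OF fin] cS by blast
    moreover have "card (orbit p x) \<ge> 1"
      using orbit_nonempty[of p x] finite_subset[OF \<open>orbit p x \<subseteq> S\<close> fin]
      by (simp add: Suc_le_eq card_gt_0_iff)
    ultimately show "p \<in> (\<Union>k\<in>{1..m}. {p\<in>Ev S. card (orbit p x) = k})" using pE by auto
  qed auto
  have "card (Ev S) = (\<Sum>k\<in>{1..m}. card {p\<in>Ev S. card (orbit p x) = k})"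
    by (subst eq, rule card_UN_disjoint) (auto intro: finite_subset[OF _ finite_Ev[OF fin]])
  also have "\<dots> = (\<Sum>k\<in>{1..m}. if even k then \<Prod>{m-k+1..m-1} * fe (m-k) else 0)"
  proof (rule sum.cong[OF refl])
    fix k assume k: "k \<in> {1..m}"
    show "card {p\<in>Ev S. card (orbit p x) = k} = (if even k then \<Prod>{m-k+1..m-1} * fe (m-k) else 0)"
    proof (cases "even k")
      case False
      have e: "{p\<in>Ev S. card (orbit p x) = k} = {}" using xS False by (auto simp: Ev_def)
      show ?thesis unfolding e using False by simp
    next
      case True
      let ?L = "{ys. length ys = k - 1 \<and> distinct ys \<and> set ys \<subseteq> S - {x}}"
      have cSx: "card (S - {x}) = m - 1" using cS xS fin by simp
      have "card {p\<in>Ev S. card (orbit p x) = k} = (\<Sum>ys\<in>?L. card (Ev (S - insert x (set ys))))"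
        using count_even[OF fin xS True] k by simp
      also have "\<dots> = (\<Sum>ys\<in>?L. fe (m - k))"
      proof (rule sum.cong[OF refl])
        fix ys assume ys: "ys \<in> ?L"
        have "card (S - insert x (set ys)) = m - k"
        proof -
          have "insert x (set ys) \<subseteq> S" using ys xS by auto
          moreover have "card (insert x (set ys)) = k"
          proof -
            have "x \<notin> set ys" using ys by auto
            then show ?thesis using ys k distinct_card[of ys] by simp
          qed
          ultimately show ?thesis using card_Diff_subset[of "insert x (set ys)" S] cS by simp
        qed
        moreover have "m - k < m" using k by auto
        ultimately show "card (Ev (S - insert x (set ys))) = fe (m - k)"
          using IH[of "S - insert x (set ys)"] fin by simp
      qed
      also have "\<dots> = card ?L * fe (m - k)" by simp
      also have "card ?L = \<Prod>{m-k+1..m-1}"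
        using card_lists_distinct_length_eq[of "S - {x}" "k - 1"] fin cSx k
        by (auto simp add: Suc_diff_le)
      finally show ?thesis using True by simp
    qed
  qed
  finally show ?thesis unfolding gsum_def .
qed


lemma prod_step: assumes "1 \<le> k" "k \<le> m"
  shows "\<Prod>{Suc (Suc m) - (k+2) + 1..Suc (Suc m) - 1} = Suc m * m * \<Prod>{m-k+1..m-1}"
proof -
  obtain m' where m: "m = Suc m'" using assms by (cases m) auto
  define a where "a = m - k + 1"
  have a1: "a \<le> Suc m'" using a_def m assms by simp
  have h1: "\<Prod>{a..Suc m} = \<Prod>{a..m} * Suc m" using a1 m by (simp only: prod.cl_ivl_Suc) simp
  have h2: "\<Prod>{a..Suc m'} = \<Prod>{a..m'} * Suc m'" using a1 by (simp only: prod.cl_ivl_Suc) simp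
  have l: "\<Prod>{Suc (Suc m) - (k+2) + 1..Suc (Suc m) - 1} = \<Prod>{a..Suc m}" using a_def by simp
  have r: "\<Prod>{m-k+1..m-1} = \<Prod>{a..m'}" using a_def m by simp
  show ?thesis using l r h1 h2 m by (metis mult.commute mult.assoc)
qed

lemma sum_split3: "sum (f::nat\<Rightarrow>nat) {1..Suc (Suc m)} = f 1 + f 2 + sum (\<lambda>k. f (k+2)) {1..m}"
proof -
  have "sum f {1..Suc (Suc m)} = f 1 + sum f {2..Suc (Suc m)}"
    by (subst sum.atLeast_Suc_atMost) (auto simp: numeral_2_eq_2)
  also have "sum f {2..Suc (Suc m)} = f 2 + sum f {3..Suc (Suc m)}"
    by (subst sum.atLeast_Suc_atMost) (auto simp: numeral_3_eq_3 numeral_2_eq_2)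
  also have "sum f {3..Suc (Suc m)} = sum (\<lambda>k. f (k+2)) {1..m}"
    using sum.shift_bounds_cl_nat_ivl[of f 1 2 m] by (simp add: numeral_3_eq_3)
  finally show ?thesis by simp
qed

lemma gsum_rec: "gsum (Suc (Suc m)) = Suc m * fe m + Suc m * m * gsum m"
proof -
  define h where "h = (\<lambda>m k. if even k then \<Prod>{m-k+1..m-1} * fe (m-k) else (0::nat))"
  have g: "gsum m = sum (h m) {1..m}" for m unfolding gsum_def h_def by simp
  have "gsum (Suc (Suc m)) = h (Suc (Suc m)) 1 + h (Suc (Suc m)) 2 + sum (\<lambda>k. h (Suc (Suc m)) (k+2)) {1..m}"
    unfolding g by (rule sum_split3)
  also have "h (Suc (Suc m)) 1 = 0" unfolding h_def by simp
  also have "h (Suc (Suc m)) 2 = Suc m * fe m" unfolding h_def by simp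
  also have "sum (\<lambda>k. h (Suc (Suc m)) (k+2)) {1..m} = sum (\<lambda>k. Suc m * m * h m k) {1..m}"
  proof (rule sum.cong[OF refl])
    fix k assume k: "k \<in> {1..m}"
    show "h (Suc (Suc m)) (k+2) = Suc m * m * h m k"
      using prod_step[of k m] k unfolding h_def by auto
  qed
  also have "\<dots> = Suc m * m * gsum m" unfolding g by (simp add: sum_distrib_left)
  finally show ?thesis by simp
qed

lemma gsum_fe: "m \<ge> 1 \<Longrightarrow> gsum m = fe m"
proof (induction m rule: fe.induct)
  case 1 then show ?case by simp
next
  case 2 then show ?case by (simp add: gsum_def)
next
  case (3 m)
  show ?case
  proof (cases "m = 0")
    case True then show ?thesis by (simp add: gsum_def)
  next
    case False
    then have "gsum m = fe m" using 3 by simp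
    then show ?thesis by (simp add: gsum_rec power2_eq_square algebra_simps)
  qed
qed

lemma Ev_card: "finite (S::'a set) \<Longrightarrow> card (Ev S) = fe (card S)"
proof (induction "card S" arbitrary: S rule: less_induct)
  case less
  show ?case
  proof (cases "card S = 0")
    case True
    then have "S = {}" using less.prems by simp
    then have "Ev S = {id}" by (auto simp: Ev_def)
    then show ?thesis using \<open>S = {}\<close> by simp
  next
    case False
    then show ?thesis using Ev_card_rec[OF less.prems refl] less.hyps gsum_fe by simp
  qed
qed


lemma count_closed:
  fixes S :: "'a set"
  assumes fin: "finite S" and cS: "card S = m" and xS: "x \<in> S" and ev: "even k" and k: "k \<in> {1..m}"
  shows "card {p\<in>Ev S. card (orbit p x) = k} = \<Prod>{m-k+1..m-1} * fe (m-k)"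
proof -
  let ?L = "{ys. length ys = k - 1 \<and> distinct ys \<and> set ys \<subseteq> S - {x}}"
  have cSx: "card (S - {x}) = m - 1" using cS xS fin by simp
  have "card {p\<in>Ev S. card (orbit p x) = k} = (\<Sum>ys\<in>?L. card (Ev (S - insert x (set ys))))"
    using count_even[OF fin xS ev] k by simp
  also have "\<dots> = (\<Sum>ys\<in>?L. fe (m - k))"
  proof (rule sum.cong[OF refl])
    fix ys assume ys: "ys \<in> ?L"
    have "card (S - insert x (set ys)) = m - k"
    proof -
      have "insert x (set ys) \<subseteq> S" using ys xS by auto
      moreover have "card (insert x (set ys)) = k"
      proof -
        have "x \<notin> set ys" using ys by auto
        then show ?thesis using ys k distinct_card[of ys] by simp
      qed
      ultimately show ?thesis using card_Diff_subset[of "insert x (set ys)" S] cS by simp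
    qed
    then show "card (Ev (S - insert x (set ys))) = fe (m - k)"
      using Ev_card[of "S - insert x (set ys)"] fin by simp
  qed
  also have "\<dots> = card ?L * fe (m - k)" by simp
  also have "card ?L = \<Prod>{m-k+1..m-1}"
    using card_lists_distinct_length_eq[of "S - {x}" "k - 1"] fin cSx k
    by (auto simp add: Suc_diff_le)
  finally show ?thesis .
qed

lemma prodA: fixes n k :: nat assumes "1 \<le> k" "k \<le> n"
  shows "n * \<Prod>{n-k+1..n-1} = \<Prod>{n-k+1..n}"
proof -
  obtain n' where n: "n = Suc n'" using assms by (cases n) auto
  have "n - k + 1 \<le> Suc n'" using assms n by simp
  then have "\<Prod>{n-k+1..Suc n'} = \<Prod>{n-k+1..n'} * Suc n'" by (simp only: prod.cl_ivl_Suc) simp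
  then show ?thesis using n by simp
qed

lemma prod2: fixes b n :: nat shows "Suc b \<le> n \<Longrightarrow> \<Prod>{b..n} = b * (Suc b * \<Prod>{Suc (Suc b)..n})"
proof -
  assume h: "Suc b \<le> n"
  have "{b..n} = insert b (insert (Suc b) {Suc (Suc b)..n})"
    using atLeastAtMost_insertL[of b n] atLeastAtMost_insertL[OF h] h by simp
  then show ?thesis by simp
qed

lemma prodA2: fixes j n :: nat shows "2*j \<le> n \<Longrightarrow> \<Prod>{n-2*j+1..n} = (\<Prod>i<j. (n - 2*i) * (n - 1 - 2*i))"
proof (induction j)
  case 0 then show ?case by simp
next
  case (Suc j)
  have r0: "n - 2*Suc j + 1 = n - 1 - 2*j" and r1: "Suc (n - 1 - 2*j) = n - 2*j"
    and r2: "Suc (n - 2*j) = n - 2*j + 1" using Suc.prems by auto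
  have "\<Prod>{n - 2*Suc j + 1..n} = (n - 1 - 2*j) * ((n - 2*j) * \<Prod>{n - 2*j + 1..n})"
    using prod2[of "n - 1 - 2*j" n] Suc.prems unfolding r0 by (simp only: r1 r2)
  also have "\<dots> = (n - 1 - 2*j) * ((n - 2*j) * (\<Prod>i<j. (n - 2*i) * (n - 1 - 2*i)))"
    using Suc by simp
  also have "\<dots> = (\<Prod>i<Suc j. (n - 2*i) * (n - 1 - 2*i))" by (simp only: prod.lessThan_Suc mult_ac)
  finally show ?case .
qed

lemma feB: fixes j n :: nat shows "2*j \<le> n \<Longrightarrow> fe n = fe (n - 2*j) * (\<Prod>i<j. n - 1 - 2*i)^2"
proof (induction j)
  case 0 then show ?case by simp
next
  case (Suc j)
  have e: "n - 2*j = Suc (Suc (n - 2 * Suc j))" using Suc.prems by simp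
  have e2: "n - 1 - 2*j = Suc (n - 2 * Suc j)" using Suc.prems by simp
  have "fe (n - 2*j) = (n - 1 - 2*j)^2 * fe (n - 2 * Suc j)"
    unfolding e e2 by (rule fe.simps(3))
  then show ?case using Suc by (simp add: power_mult_distrib mult_ac)
qed

lemma fe_pos: "even m \<Longrightarrow> fe m > 0"
  by (induction m rule: fe.induct) auto

lemma Ev_eq: "even_cycle_perms n = Ev {1..n}"
  unfolding even_cycle_perms_def Ev_def cycle_len_def by simp

lemma card_filter_sum: "finite A \<Longrightarrow> card {x\<in>A. P x} = (\<Sum>x\<in>A. if P x then 1 else (0::nat))"
  by (simp add: sum.If_cases Int_def)

theorem proposition3p1:
  fixes n k :: nat
  assumes "n > 0" and "even n" and "1 \<le> k" and "k \<le> n"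
  shows "EY_even n k =
           (if even k
            then (\<Prod>i<k div 2. real (n - 2 * i)) / (\<Prod>i<k div 2. real (n - 1 - 2 * i))
            else 0)"
proof -
  let ?S = "{1..n}"
  have fin: "finite ?S" by simp
  have sumY: "(\<Sum>p\<in>Ev ?S. Y n k p) = (\<Sum>x\<in>?S. card {p\<in>Ev ?S. card (orbit p x) = k})"
  proof -
    have "(\<Sum>p\<in>Ev ?S. Y n k p) = (\<Sum>p\<in>Ev ?S. \<Sum>x\<in>?S. if card (orbit p x) = k then 1 else 0)"
      unfolding Y_def cycle_len_def by (intro sum.cong refl card_filter_sum) simp
    also have "\<dots> = (\<Sum>x\<in>?S. \<Sum>p\<in>Ev ?S. if card (orbit p x) = k then 1 else 0)"
      by (rule sum.swap)
    also have "\<dots> = (\<Sum>x\<in>?S. card {p\<in>Ev ?S. card (orbit p x) = k})"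
      using finite_Ev[OF fin] by (simp add: card_filter_sum)
    finally show ?thesis .
  qed
  show ?thesis
  proof (cases "even k")
    case False
    have "card {p\<in>Ev ?S. card (orbit p x) = k} = 0" if "x \<in> ?S" for x
    proof -
      have "{p\<in>Ev ?S. card (orbit p x) = k} = {}" using that False by (auto simp: Ev_def)
      then show ?thesis by (simp only: card.empty)
    qed
    then have "(\<Sum>p\<in>Ev ?S. Y n k p) = 0" using sumY by simp
    then have "(\<Sum>p\<in>Ev ?S. real (Y n k p)) = 0" by (metis of_nat_0 of_nat_sum)
    then show ?thesis using False unfolding EY_even_def Ev_eq by simp
  next
    case True
    then obtain j where kj: "k = 2*j" by blast
    have j1: "j \<ge> 1" using kj assms by simp
    have jn: "2*j \<le> n" using kj assms by simp
    have cnt: "card {p\<in>Ev ?S. card (orbit p x) = k} = \<Prod>{n-k+1..n-1} * fe (n-k)" if "x \<in> ?S" for x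
      using count_closed[OF fin _ that True] assms by simp
    have "(\<Sum>p\<in>Ev ?S. Y n k p) = n * (\<Prod>{n-k+1..n-1} * fe (n-k))"
      using sumY cnt by simp
    also have "\<dots> = (\<Prod>i<j. (n - 2*i) * (n - 1 - 2*i)) * fe (n - 2*j)"
      using prodA[of k n] prodA2[OF jn] assms kj by (simp add: mult.assoc[symmetric])
    finally have num: "(\<Sum>p\<in>Ev ?S. Y n k p) = (\<Prod>i<j. n - 2*i) * (\<Prod>i<j. n - 1 - 2*i) * fe (n - 2*j)"
      by (simp add: prod.distrib)
    have den: "card (Ev ?S) = fe (n - 2*j) * (\<Prod>i<j. n - 1 - 2*i)^2"
      using Ev_card[OF fin] feB[OF jn] by simp
    have F: "real (fe (n - 2*j)) \<noteq> 0" using fe_pos[of "n - 2*j"] assms(2) by simp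
    have Q: "(\<Prod>i<j. real (n - 1 - 2*i)) \<noteq> 0"
    proof -
      have "\<forall>i<j. real (n - 1 - 2*i) \<noteq> 0" using jn assms(2) by auto
      then show ?thesis by (simp add: prod_zero_iff)
    qed
    have "EY_even n k = real ((\<Prod>i<j. n - 2*i) * (\<Prod>i<j. n - 1 - 2*i) * fe (n - 2*j)) /
        real (fe (n - 2*j) * (\<Prod>i<j. n - 1 - 2*i)^2)"
      unfolding EY_even_def Ev_eq[symmetric] using num den Ev_eq
      by (metis of_nat_sum)
    also have "\<dots> = (\<Prod>i<j. real (n - 2*i)) / (\<Prod>i<j. real (n - 1 - 2*i))"
      using F Q by (simp add: of_nat_prod power2_eq_square field_simps)
    finally show ?thesis using True kj by simp
  qed
qed

end
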